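(* Let $d\ge2$. There is a constant $C_d>0$ depending only on $d$ such that for every $N\in\mathbb{N}$ and every $X\in\mathcal X_N$, $$N\le|\zeta(X)|\le N+C_dN^{\frac{d-1}{d}}P_N(X).$$ In particular $|\zeta(X)|\le C_dN$ (with a possibly larger dimensional constant).
   Context: $\mathcal X_N$ is the family of subsets of $\mathbb{Z}^d$ with exactly $N$ elements. For $X\subset\mathbb{Z}^d$ and $p\in X$, $\mathrm{val}(p)=\#\{q\in\mathbb{Z}^d\setminus X:|p-q|=1\}$, $P(X)=\sum_{p\in X}\mathrm{val}(p)$, and for $X\in\mathcal X_N$, $P_N(X)=N^{-(d-1)/d}P(X)$. Kuhn decomposition: for a permutation $\pi$ of $\{1,\dots,d\}$, $T_\pi=\{x\in\mathbb{R}^d:0\le x_{\pi(d)}\le\dots\le x_{\pi(1)}\le1\}$; $\mathcal{T}=\{z+T_\pi:z\in\mathbb{Z}^d,\pi\}$; for $i\in\mathbb{Z}^d$, $\mathcal T(i)=\{T\in\mathcal T:i\in T\}$. For $X\subset\mathbb{Z}^d$, $\zeta(X)=\bigcup_{i\in X}\bigcup_{T\in\mathcal T(i)}T\subset\mathbb{R}^d$. $|\cdot|$ is Lebesgue measure. *)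

theory Defs
  imports "HOL-Analysis.Analysis"
begin

text \<open>Lattice points of Z^d are vectors of type int^'n; d = CARD('n).
  Embedding into R^d.\<close>
definition lat :: "int^'n \<Rightarrow> real^'n" where
  "lat p = (\<chi> j. real_of_int (p $ j))"

definition val :: "(int^'n) set \<Rightarrow> int^'n \<Rightarrow> nat" where
  "val X p = card {q. q \<notin> X \<and> norm (lat p - lat q) = 1}"

definition perim :: "(int^'n) set \<Rightarrow> real" where
  "perim X = (\<Sum>p\<in>X. real (val X p))"

definition perimN :: "(int^'n::finite) set \<Rightarrow> real" where
  "perimN X = real (card X) powr (- (real CARD('n) - 1) / real CARD('n)) * perim X"

text \<open>A permutation pi of {1..d} composed with a fixed
  enumeration of the index type is a bijection s : {0..<d} -> 'n, with
  s k = the coordinate pi(k+1).\<close>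
definition kuhn_simplex :: "(nat \<Rightarrow> 'n::finite) \<Rightarrow> (real^'n) set" where
  "kuhn_simplex s = {x. 0 \<le> x $ s (CARD('n) - 1) \<and> x $ s 0 \<le> 1 \<and>
      (\<forall>k. Suc k < CARD('n) \<longrightarrow> x $ s (Suc k) \<le> x $ s k)}"

definition kuhn_family :: "(real^'n::finite) set set" where
  "kuhn_family = {(\<lambda>x. lat z + x) ` kuhn_simplex s | z s.
      bij_betw s {..<CARD('n)} (UNIV :: 'n set)}"

definition kuhn_at :: "int^'n::finite \<Rightarrow> (real^'n) set set" where
  "kuhn_at i = {T \<in> kuhn_family. lat i \<in> T}"

definition zeta :: "(int^'n::finite) set \<Rightarrow> (real^'n) set" where
  "zeta X = (\<Union>i\<in>X. \<Union>T\<in>kuhn_at i. T)"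

end

theory Submission
  imports Defs "HOL-Library.FuncSet"
begin

definition cube :: "int^'n::finite \<Rightarrow> (real^'n) set" where
  "cube z = cbox (lat z) (lat z + 1)"

definition VV :: "(int^'n::finite) set" where
  "VV = {w. \<forall>j. w $ j \<in> {0,1}}"

definition Nb :: "(int^'n::finite) set \<Rightarrow> int^'n \<Rightarrow> (int^'n) set" where
  "Nb X p = {q. q \<notin> X \<and> norm (lat p - lat q) = 1}"

definition WW :: "(int^'n::finite) set \<Rightarrow> (int^'n) set" where
  "WW X = (\<lambda>(i,v). i - v) ` (X \<times> VV)"

lemma lat_nth[simp]: "lat p $ j = real_of_int (p $ j)"
  by (simp add: lat_def)

lemma neg_hyp: "negligible {x::real^'n::finite. x$k = c}"
  by (simp add: cart_eq_inner_axis negligible_standard_hyperplane)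

lemma cube_meas: "measure lebesgue (cube (z::int^'n::finite)) = 1"
proof -
  have "measure lebesgue (cube z) = Henstock_Kurzweil_Integration.content (cube z)"
    unfolding cube_def by (intro measure_completion) simp
  also have "\<dots> = 1"
  proof -
    have "lat z \<in> cbox (lat z) (lat z + 1)" by (simp add: mem_box_cart)
    hence "cbox (lat z) (lat z + 1) \<noteq> {}" by blast
    thus ?thesis unfolding cube_def by (subst content_cbox_cart) auto
  qed
  finally show ?thesis .
qed

lemma kuhn_bounds:
  assumes x: "x \<in> kuhn_simplex s" and s: "bij_betw s {..<CARD('n)} (UNIV::'n::finite set)"
  shows "0 \<le> x $ j \<and> x $ j \<le> 1"
proof -
  let ?d = "CARD('n)"
  from x have a: "0 \<le> x $ s (?d - 1)" "x $ s 0 \<le> 1"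
    "\<And>k. Suc k < ?d \<Longrightarrow> x $ s (Suc k) \<le> x $ s k"
    by (auto simp: kuhn_simplex_def)
  have up: "x $ s k \<le> 1" if "k < ?d" for k
    using that
  proof (induction k)
    case 0 thus ?case using a(2) by simp
  next
    case (Suc k) then have "x $ s k \<le> 1" by simp
    with a(3)[OF Suc.prems] show ?case by linarith
  qed
  have down: "0 \<le> x $ s (?d - 1 - m)" if "m < ?d" for m
    using that
  proof (induction m)
    case 0 thus ?case using a(1) by simp
  next
    case (Suc m)
    then have h: "0 \<le> x $ s (?d - 1 - m)" by simp
    have e: "Suc (?d - 1 - Suc m) = ?d - 1 - m" using Suc.prems by arith
    have "Suc (?d - 1 - Suc m) < ?d" using Suc.prems by arith
    from a(3)[OF this] e h show ?case by simp
  qed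
  from s have "s ` {..<?d} = UNIV" by (simp add: bij_betw_def)
  then obtain k where k: "k < ?d" "j = s k" by (metis UNIV_I imageE lessThan_iff)
  have "?d - 1 - (?d - 1 - k) = k" using k by arith
  with down[of "?d - 1 - k"] up[OF k(1)] k show ?thesis by simp
qed

lemma kuhn_compact:
  assumes s: "bij_betw s {..<CARD('n)} (UNIV::'n::finite set)"
  shows "compact (kuhn_simplex s)"
proof -
  have c: "closed {x::real^'n. Suc k < CARD('n) \<longrightarrow> x $ s (Suc k) \<le> x $ s k}" for k
  proof (cases "Suc k < CARD('n)")
    case True
    have "{x::real^'n. Suc k < CARD('n) \<longrightarrow> x $ s (Suc k) \<le> x $ s k}
          = {x. x $ s (Suc k) \<le> x $ s k}" using True by simp
    thus ?thesis by (simp add: closed_Collect_le continuous_on_component continuous_on_id)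
  next
    case False thus ?thesis by simp
  qed
  have "kuhn_simplex s = {x::real^'n. 0 \<le> x $ s (CARD('n) - 1)} \<inter> {x. x $ s 0 \<le> 1} \<inter>
       (\<Inter>k. {x. Suc k < CARD('n) \<longrightarrow> x $ s (Suc k) \<le> x $ s k})"
    by (auto simp: kuhn_simplex_def)
  moreover have "closed {x::real^'n. 0 \<le> x $ s (CARD('n) - 1)}"
    by (simp add: closed_Collect_le continuous_on_component continuous_on_id continuous_on_const)
  moreover have "closed {x::real^'n. x $ s 0 \<le> 1}"
    by (simp add: closed_halfspace_component_le_cart)
  ultimately have "closed (kuhn_simplex s)" using c by (simp add: closed_Int closed_INT)
  moreover have "bounded (kuhn_simplex s)"
  proof -
    have "kuhn_simplex s \<subseteq> cbox 0 1" using kuhn_bounds[OF _ s] by (auto simp: mem_box_cart)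
    thus ?thesis by (rule bounded_subset[OF bounded_cbox])
  qed
  ultimately show ?thesis by (simp add: compact_eq_bounded_closed)
qed

lemma sort_exists:
  fixes f :: "'n::finite \<Rightarrow> real"
  shows "\<exists>s. bij_betw s {..<CARD('n)} (UNIV::'n set) \<and>
             (\<forall>k. Suc k < CARD('n) \<longrightarrow> f (s (Suc k)) \<le> f (s k))"
proof -
  obtain L where L: "set L = (UNIV::'n set)" "distinct L"
    using finite_distinct_list[of "UNIV::'n set"] by auto
  define M where "M = sort_key (\<lambda>j. - f j) L"
  have M: "set M = UNIV" "distinct M" "sorted (map (\<lambda>j. - f j) M)"
    using L by (auto simp: M_def)
  have len: "length M = CARD('n)" using distinct_card[OF M(2)] M(1) by simp
  have "bij_betw ((!) M) {..<CARD('n)} UNIV" by (rule bij_betw_nth) (use M len in auto)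
  moreover have "f (M ! Suc k) \<le> f (M ! k)" if "Suc k < CARD('n)" for k
  proof -
    have "(map (\<lambda>j. - f j) M) ! k \<le> (map (\<lambda>j. - f j) M) ! Suc k"
      using sorted_nth_mono[OF M(3), of k "Suc k"] that len by simp
    thus ?thesis using that len by simp
  qed
  ultimately show ?thesis by blast
qed

lemma cube_sub_zeta:
  assumes "i \<in> X" shows "cube i \<subseteq> zeta (X::(int^'n::finite) set)"
proof
  fix y assume y: "y \<in> cube i"
  define x where "x = y - lat i"
  have x01: "0 \<le> x $ j \<and> x $ j \<le> 1" for j
  proof -
    have "real_of_int (i$j) \<le> y$j \<and> y$j \<le> real_of_int (i$j) + 1"
      using y by (simp add: cube_def mem_box_cart)
    thus ?thesis by (simp add: x_def)
  qed
  obtain s where s: "bij_betw s {..<CARD('n)} (UNIV::'n set)"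
      "\<forall>k. Suc k < CARD('n) \<longrightarrow> x $ (s (Suc k)) \<le> x $ (s k)"
    using sort_exists[of "\<lambda>j. x $ j"] by blast
  have xs: "x \<in> kuhn_simplex s" using s(2) x01 by (auto simp: kuhn_simplex_def)
  have zs: "0 \<in> kuhn_simplex s" by (simp add: kuhn_simplex_def)
  let ?T = "(\<lambda>x. lat i + x) ` kuhn_simplex s"
  have T: "?T \<in> kuhn_family" unfolding kuhn_family_def using s(1) by blast
  have "lat i \<in> ?T" using zs by (metis add.right_neutral image_eqI)
  hence "?T \<in> kuhn_at i" using T by (simp add: kuhn_at_def)
  moreover have "y \<in> ?T" using xs unfolding x_def by (auto intro!: image_eqI[where x="y - lat i"])
  ultimately show "y \<in> zeta X" using assms unfolding zeta_def by blast
qed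

lemma kuhn_at_D:
  assumes "T \<in> kuhn_at (i::int^'n::finite)"
  obtains z s where "bij_betw s {..<CARD('n)} (UNIV::'n set)"
    "T = (\<lambda>x. lat z + x) ` kuhn_simplex s" "i - z \<in> VV" "T \<subseteq> cube z"
proof -
  from assms obtain z s where s: "bij_betw s {..<CARD('n)} (UNIV::'n set)"
    and T: "T = (\<lambda>x. lat z + x) ` kuhn_simplex s" and iT: "lat i \<in> T"
    by (auto simp: kuhn_at_def kuhn_family_def)
  from iT T have "lat i - lat z \<in> kuhn_simplex s" by auto
  hence b: "0 \<le> real_of_int (i$j) - real_of_int (z$j) \<and> real_of_int (i$j) - real_of_int (z$j) \<le> 1" for j
    using kuhn_bounds[OF _ s, of "lat i - lat z" j] by simp
  have "i - z \<in> VV"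
    unfolding VV_def
  proof (simp only: mem_Collect_eq, intro allI)
    fix j
    have "real_of_int (i$j - z$j) \<ge> 0" "real_of_int (i$j - z$j) \<le> 1" using b[of j] by simp_all
    hence "i$j - z$j \<ge> 0" "i$j - z$j \<le> 1" by simp_all
    thus "(i - z) $ j \<in> {0,1}" by auto
  qed
  moreover have "T \<subseteq> cube z" using kuhn_bounds[OF _ s] by (fastforce simp: T cube_def mem_box_cart)
  ultimately show ?thesis using that s T by blast
qed

lemma finite_box:
  assumes "\<And>j. finite (A j)" shows "finite {q::'a^'n::finite. \<forall>j. q $ j \<in> A j}"
proof -
  have "{q::'a^'n. \<forall>j. q $ j \<in> A j} \<subseteq> vec_lambda ` (PiE UNIV A)"
  proof
    fix q :: "'a^'n" assume "q \<in> {q. \<forall>j. q $ j \<in> A j}"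
    hence "(\<lambda>j. q $ j) \<in> PiE UNIV A" by (auto simp: PiE_iff)
    moreover have "q = vec_lambda (\<lambda>j. q $ j)" by simp
    ultimately show "q \<in> vec_lambda ` (PiE UNIV A)" by blast
  qed
  moreover have "finite (PiE UNIV A)" by (rule finite_PiE) (use assms in auto)
  ultimately show ?thesis by (meson finite_surj)
qed

lemma finite_VV: "finite (VV::(int^'n::finite) set)"
  unfolding VV_def by (rule finite_box) simp

lemma zero_VV: "0 \<in> VV" by (simp add: VV_def)

lemma nb_finite: "finite (Nb X (p::int^'n::finite))"
proof -
  have "Nb X p \<subseteq> {q. \<forall>j. q $ j \<in> {p$j - 1 .. p$j + 1}}"
  proof (safe)
    fix q j assume "q \<in> Nb X p"
    hence "norm (lat p - lat q) = 1" by (simp add: Nb_def)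
    hence ab: "\<bar>real_of_int (p$j) - real_of_int (q$j)\<bar> \<le> 1"
      using component_le_norm_cart[of "lat p - lat q" j] by simp
    have "real_of_int (p$j - 1) \<le> real_of_int (q$j)" "real_of_int (q$j) \<le> real_of_int (p$j + 1)"
      using ab by (auto simp: abs_le_iff)
    hence "p$j - 1 \<le> q$j" "q$j \<le> p$j + 1" by (simp only: of_int_le_iff)+
    thus "q $ j \<in> {p$j - 1 .. p$j + 1}" by simp
  qed
  moreover have "finite {q::int^'n. \<forall>j. q $ j \<in> {p$j - 1 .. p$j + 1}}" by (rule finite_box) simp
  ultimately show ?thesis by (rule finite_subset)
qed

lemma path_lemma:
  assumes "finite (J::'n::finite set)"
  shows "\<forall>i v. (\<forall>j. v $ j = (if j \<in> J then 1 else 0)) \<longrightarrow> i \<in> X \<longrightarrow> i - v \<notin> X \<longrightarrow>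
     (\<exists>p\<in>X. \<exists>q. q \<notin> X \<and> norm (lat p - lat q) = 1 \<and> (\<exists>w\<in>VV. i - v = q - (w::int^'n)))"
  using assms
proof (induction J rule: finite_induct)
  case empty
  { fix i v :: "int^'n" assume a: "\<forall>j. v $ j = (if j \<in> {} then 1 else 0)" "i \<in> X" "i - v \<notin> X"
    from a(1) have "v = 0" by (simp add: vec_eq_iff)
    with a have False by simp }
  thus ?case by blast
next
  case (insert j J)
  { fix i v :: "int^'n" assume a: "\<forall>k. v $ k = (if k \<in> insert j J then 1 else 0)" "i \<in> X" "i - v \<notin> X"
    define e where "e = (axis j 1 :: int^'n)"
    define v' where "v' = v - e"
    have v': "\<forall>k. v' $ k = (if k \<in> J then 1 else 0)"
      using a(1) insert.hyps(2) by (auto simp: v'_def e_def axis_def)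
    have iv: "i - v = (i - e) - v'" by (simp add: v'_def)
    have v'V: "v' \<in> VV" using v' by (simp add: VV_def)
    have "\<exists>p\<in>X. \<exists>q. q \<notin> X \<and> norm (lat p - lat q) = 1 \<and> (\<exists>w\<in>VV. i - v = q - w)"
    proof (cases "i - e \<in> X")
      case True
      have "i - e - v' \<notin> X" using a(3) iv by simp
      from insert.IH[rule_format, OF v'[rule_format] True this] show ?thesis unfolding iv .
    next
      case False
      have "lat i - lat (i - e) = axis j 1" by (simp add: vec_eq_iff e_def axis_def)
      hence nrm: "norm (lat i - lat (i - e)) = 1" by simp
      show ?thesis using a(2) False v'V iv nrm by blast
    qed }
  thus ?case by blast
qed

lemma W_sub:
  assumes "finite X"
  shows "WW X \<subseteq> X \<union> (\<Union>p\<in>X. \<Union>q\<in>Nb X p. (\<lambda>w. q - w) ` VV)"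
proof
  fix z assume "z \<in> WW X"
  then obtain i v where iv: "i \<in> X" "v \<in> VV" "z = i - v" by (auto simp: WW_def)
  show "z \<in> X \<union> (\<Union>p\<in>X. \<Union>q\<in>Nb X p. (\<lambda>w. q - w) ` VV)"
  proof (cases "z \<in> X")
    case True thus ?thesis by simp
  next
    case False
    let ?J = "{j. v $ j = 1}"
    have vJ: "\<forall>j. v $ j = (if j \<in> ?J then 1 else 0)" using iv(2) by (auto simp: VV_def)
    from path_lemma[of ?J X, rule_format, OF _ vJ[rule_format] iv(1)] False iv(3)
    obtain p q w where "p \<in> X" "q \<notin> X" "norm (lat p - lat q) = 1" "w \<in> VV" "z = q - w"
      by auto
    thus ?thesis by (auto simp: Nb_def)
  qed
qed

lemma zeta_sub: "zeta X \<subseteq> \<Union> (cube ` WW (X::(int^'n::finite) set))"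
proof
  fix y assume "y \<in> zeta X"
  then obtain i T where iT: "i \<in> X" "T \<in> kuhn_at i" "y \<in> T" by (auto simp: zeta_def)
  from kuhn_at_D[OF iT(2)] obtain z s where "i - z \<in> VV" "T \<subseteq> cube z" by metis
  moreover have "z = i - (i - z)" by simp
  ultimately have "z \<in> WW X" "y \<in> cube z" using iT unfolding WW_def
    by (auto intro!: image_eqI[where x="(i, i - z)"])
  thus "y \<in> \<Union> (cube ` WW X)" by blast
qed

lemma finite_WW: "finite X \<Longrightarrow> finite (WW (X::(int^'n::finite) set))"
  unfolding WW_def by (intro finite_imageI finite_cartesian_product finite_VV)

lemma kuhn_restrict: "kuhn_simplex (restrict s {..<CARD('n)}) = kuhn_simplex (s::nat \<Rightarrow> 'n::finite)"
proof -
  have "0 < CARD('n)" by simp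
  thus ?thesis by (auto simp: kuhn_simplex_def)
qed

lemma zeta_compact:
  assumes "finite X" shows "compact (zeta (X::(int^'n::finite) set))"
proof -
  let ?F = "\<Union> (kuhn_at ` X)"
  have eq: "zeta X = \<Union> ?F" by (auto simp: zeta_def)
  have "?F \<subseteq> (\<lambda>(z,s). (\<lambda>x. lat z + x) ` kuhn_simplex s) ` (WW X \<times> PiE {..<CARD('n)} (\<lambda>_. UNIV))"
  proof
    fix T assume "T \<in> ?F"
    then obtain i where i: "i \<in> X" "T \<in> kuhn_at i" by auto
    from kuhn_at_D[OF i(2)] obtain z s where zs: "T = (\<lambda>x. lat z + x) ` kuhn_simplex s" "i - z \<in> VV"
      by metis
    have "z = i - (i - z)" by simp
    hence z: "z \<in> WW X" using i zs unfolding WW_def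
      by (auto intro!: image_eqI[where x="(i, i - z)"])
    have "T = (\<lambda>(z,s). (\<lambda>x. lat z + x) ` kuhn_simplex s) (z, restrict s {..<CARD('n)})"
      using zs by (simp add: kuhn_restrict)
    moreover have "restrict s {..<CARD('n)} \<in> PiE {..<CARD('n)} (\<lambda>_. UNIV)"
      by (simp add: restrict_PiE_iff)
    ultimately show "T \<in> (\<lambda>(z,s). (\<lambda>x. lat z + x) ` kuhn_simplex s) ` (WW X \<times> PiE {..<CARD('n)} (\<lambda>_. UNIV))"
      using z by blast
  qed
  moreover have "finite (WW X \<times> PiE {..<CARD('n)} (\<lambda>_. (UNIV::'n set)))"
    using finite_WW[OF assms] by (simp add: finite_PiE)
  ultimately have fin: "finite ?F" by (meson finite_surj)
  have "compact T" if "T \<in> ?F" for T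
  proof -
    from that obtain i where "T \<in> kuhn_at i" by auto
    from kuhn_at_D[OF this] obtain z s where "bij_betw s {..<CARD('n)} (UNIV::'n set)"
      "T = (\<lambda>x. lat z + x) ` kuhn_simplex s" by metis
    thus ?thesis using compact_translation[OF kuhn_compact] by simp
  qed
  with fin show ?thesis unfolding eq by (intro compact_Union) auto
qed

lemma measure_zeta_le:
  assumes "finite X" shows "measure lebesgue (zeta X) \<le> real (card (WW (X::(int^'n::finite) set)))"
proof -
  have cw: "compact (\<Union> (cube ` WW X))"
    using finite_WW[OF assms] by (intro compact_UN) (auto simp: cube_def)
  have "measure lebesgue (zeta X) \<le> measure lebesgue (\<Union> (cube ` WW X))"
    by (rule measure_mono_fmeasurable[OF zeta_sub])
       (auto intro: fmeasurableD lmeasurable_compact zeta_compact[OF assms] cw)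
  also have "\<dots> \<le> (\<Sum>z\<in>WW X. measure lebesgue (cube z))"
    by (rule measure_UNION_le) (auto simp: finite_WW[OF assms] cube_def)
  also have "\<dots> = real (card (WW X))" by (simp add: cube_meas)
  finally show ?thesis .
qed

lemma measure_zeta_ge:
  assumes "finite X" shows "real (card X) \<le> measure lebesgue (zeta (X::(int^'n::finite) set))"
proof -
  have cx: "compact (\<Union> (cube ` X))"
    using assms by (intro compact_UN) (auto simp: cube_def)
  have "measure lebesgue (\<Union> (cube ` X)) = (\<Sum>i\<in>X. measure lebesgue (cube i))"
  proof (rule measure_negligible_finite_Union_image[OF assms])
    show "cube x \<in> lmeasurable" for x by (simp add: cube_def)
    show "pairwise (\<lambda>x y. negligible (cube x \<inter> cube y)) X"
      unfolding pairwise_def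
    proof (intro ballI impI)
      fix a b :: "int^'n" assume "a \<noteq> b"
      then obtain j where j: "a $ j \<noteq> b $ j" by (auto simp: vec_eq_iff)
      have "cube a \<inter> cube b \<subseteq> {x. x$j = real_of_int (a$j)} \<union> {x. x$j = real_of_int (a$j) + 1}"
      proof
        fix x assume x: "x \<in> cube a \<inter> cube b"
        hence xa: "real_of_int (a$j) \<le> x$j" "x$j \<le> real_of_int (a$j) + 1"
          and xb: "real_of_int (b$j) \<le> x$j" "x$j \<le> real_of_int (b$j) + 1"
          by (auto simp: cube_def mem_box_cart)
        from j have "a$j + 1 \<le> b$j \<or> b$j + 1 \<le> a$j" by arith
        hence "real_of_int (a$j + 1) \<le> real_of_int (b$j) \<or> real_of_int (b$j + 1) \<le> real_of_int (a$j)"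
          by (simp only: of_int_le_iff)
        hence "real_of_int (a$j) + 1 \<le> real_of_int (b$j) \<or> real_of_int (b$j) + 1 \<le> real_of_int (a$j)"
          by simp
        thus "x \<in> {x. x$j = real_of_int (a$j)} \<union> {x. x$j = real_of_int (a$j) + 1}"
          using xa xb by auto
      qed
      thus "negligible (cube a \<inter> cube b)"
        by (rule negligible_subset[OF negligible_Un[OF neg_hyp neg_hyp]])
    qed
  qed
  also have "\<dots> = real (card X)" by (simp add: cube_meas)
  finally have eq: "measure lebesgue (\<Union> (cube ` X)) = real (card X)" .
  have "measure lebesgue (\<Union> (cube ` X)) \<le> measure lebesgue (zeta X)"
    by (rule measure_mono_fmeasurable)
       (auto intro: fmeasurableD lmeasurable_compact zeta_compact[OF assms] cx dest: cube_sub_zeta)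
  with eq show ?thesis by simp
qed

lemma card_WW_perim:
  assumes "finite X"
  shows "real (card (WW X)) \<le> real (card X) + real (card (VV::(int^'n::finite) set)) * perim (X::(int^'n) set)"
proof -
  let ?B = "\<Union>p\<in>X. \<Union>q\<in>Nb X p. (\<lambda>w. q - w) ` (VV::(int^'n) set)"
  have finB: "finite ?B" using assms nb_finite finite_VV by blast
  have "card (WW X) \<le> card (X \<union> ?B)"
    by (rule card_mono) (use assms finB W_sub[OF assms] in auto)
  also have "\<dots> \<le> card X + card ?B" by (rule card_Un_le)
  also have "card ?B \<le> (\<Sum>p\<in>X. card (\<Union>q\<in>Nb X p. (\<lambda>w. q - w) ` (VV::(int^'n) set)))"
    by (rule card_UN_le[OF assms])
  also have "\<dots> \<le> (\<Sum>p\<in>X. \<Sum>q\<in>Nb X p. card ((\<lambda>w. q - w) ` (VV::(int^'n) set)))"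
    by (rule sum_mono, rule card_UN_le[OF nb_finite])
  also have "\<dots> \<le> (\<Sum>p\<in>X. \<Sum>q\<in>Nb X p. card (VV::(int^'n) set))"
    by (intro sum_mono card_image_le finite_VV)
  also have "\<dots> = card (VV::(int^'n) set) * (\<Sum>p\<in>X. card (Nb X p))"
    by (simp add: sum_distrib_left mult.commute)
  finally have "card (WW X) \<le> card X + card (VV::(int^'n) set) * (\<Sum>p\<in>X. card (Nb X p))"
    by simp
  hence "real (card (WW X)) \<le> real (card X) + real (card (VV::(int^'n) set)) * (\<Sum>p\<in>X. real (card (Nb X p)))"
    by (metis of_nat_add of_nat_le_iff of_nat_mult of_nat_sum)
  moreover have "perim X = (\<Sum>p\<in>X. real (card (Nb X p)))"
    by (simp add: perim_def val_def Nb_def)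
  ultimately show ?thesis by simp
qed

lemma card_WW_le0: "finite X \<Longrightarrow> card (WW (X::(int^'n::finite) set)) \<le> card (X \<times> (VV::(int^'n) set))"
  unfolding WW_def by (rule card_image_le) (simp add: finite_VV)

lemma card_WW_le: "finite X \<Longrightarrow> card (WW (X::(int^'n::finite) set)) \<le> card X * card (VV::(int^'n) set)"
  using card_WW_le0[of X] by (simp add: card_cartesian_product)

theorem lemma4p4:
  assumes "CARD('n::finite) \<ge> 2"
  shows "(\<exists>C>0. \<forall>(N::nat) (X::(int^'n) set). finite X \<and> card X = N \<longrightarrow>
            real N \<le> measure lebesgue (zeta X) \<and>
            measure lebesgue (zeta X) \<le>
              real N + C * real N powr ((real CARD('n) - 1) / real CARD('n)) * perimN X)
       \<and> (\<exists>C>0. \<forall>(N::nat) (X::(int^'n) set). finite X \<and> card X = N \<longrightarrow>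
            measure lebesgue (zeta X) \<le> C * real N)"
proof
  let ?c = "real (card (VV::(int^'n) set))"
  have cpos: "?c > 0" using finite_VV zero_VV by (simp add: card_gt_0_iff) blast
  show "\<exists>C>0. \<forall>(N::nat) (X::(int^'n) set). finite X \<and> card X = N \<longrightarrow>
            real N \<le> measure lebesgue (zeta X) \<and>
            measure lebesgue (zeta X) \<le>
              real N + C * real N powr ((real CARD('n) - 1) / real CARD('n)) * perimN X"
  proof (intro exI[of _ ?c] conjI allI impI cpos)
    fix N :: nat and X :: "(int^'n) set"
    assume NX: "finite X \<and> card X = N"
    show "real N \<le> measure lebesgue (zeta X)" using measure_zeta_ge NX by blast
    let ?a = "(real CARD('n) - 1) / real CARD('n)"
    show "measure lebesgue (zeta X) \<le> real N + ?c * real N powr ?a * perimN X"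
    proof (cases "N = 0")
      case True
      hence "X = {}" using NX by auto
      hence "zeta X = {}" by (simp add: zeta_def)
      thus ?thesis using True by simp
    next
      case False
      have "real N powr ?a * real N powr (- ?a) = 1"
        using False by (simp add: powr_add[symmetric])
      hence pw: "real N powr ?a * perimN X = perim X"
        unfolding perimN_def using NX by (simp add: minus_divide_left mult.assoc[symmetric])
      have "measure lebesgue (zeta X) \<le> real (card (WW X))" using measure_zeta_le NX by blast
      also have "\<dots> \<le> real N + ?c * perim X" using card_WW_perim NX by blast
      finally show ?thesis using pw by (simp add: mult.assoc)
    qed
  qed
  show "\<exists>C>0. \<forall>(N::nat) (X::(int^'n) set). finite X \<and> card X = N \<longrightarrow>
            measure lebesgue (zeta X) \<le> C * real N"
  proof (intro exI[of _ ?c] conjI allI impI cpos)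
    fix N :: nat and X :: "(int^'n) set"
    assume NX: "finite X \<and> card X = N"
    have "measure lebesgue (zeta X) \<le> real (card (WW X))" using measure_zeta_le NX by blast
    also have "\<dots> \<le> real (N * card (VV::(int^'n) set))"
    proof -
      have "card (WW X) \<le> N * card (VV::(int^'n) set)" using card_WW_le NX by blast
      thus ?thesis by (simp only: of_nat_le_iff)
    qed
    finally show "measure lebesgue (zeta X) \<le> ?c * real N" by (simp add: mult.commute)
  qed
qed

end
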